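(* Let $f(n)=\sum_{k=0}^n(-1)^k\binom nk C_k\binom{2n-2k}{n-k}$ for integers $n\ge 0$. Then for all integers $n\ge 2$, $$-16(2n+1)(n-1)^2f(n-2)-4(2n^2-1)f(n-1)+(2n-1)(n+1)^2f(n)=0.$$
   Context: $C_k=\binom{2k}{k}\frac{1}{k+1}$ denotes the $k$-th Catalan number. *)

theory Defs
  imports Complex_Main
begin

definition catalan :: "nat \<Rightarrow> rat" where
  "catalan k = of_nat ((2*k) choose k) / of_nat (k+1)"

definition f :: "nat \<Rightarrow> rat" where
  "f n = (\<Sum>k=0..n. (-1)^k * of_nat (n choose k) * catalan k * of_nat ((2*n - 2*k) choose (n-k)))"

end

theory Submission
  imports Defs
begin

definition T :: "nat \<Rightarrow> nat \<Rightarrow> rat" where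
  "T n k = (-1)^k * of_nat (n choose k) * catalan k * of_nat ((2*n - 2*k) choose (n-k))"

lemma f_T: "f n = (\<Sum>k=0..n. T n k)"
  unfolding f_def T_def by simp

lemma T_zero: "n < k \<Longrightarrow> T n k = 0"
  unfolding T_def by simp

lemma T_fact:
  "T (k + j) k = (-1)^k * fact (k+j) * fact (2*k) * fact (2*j) /
      (fact k ^ 3 * of_nat (k+1) * fact j ^ 3)"
proof -
  have c1: "of_nat ((k+j) choose k) = (fact (k+j) / (fact k * fact j) :: rat)"
    using binomial_fact[of k "k+j", where 'a=rat] by simp
  have c2: "of_nat ((2*k) choose k) = (fact (2*k) / (fact k * fact k) :: rat)"
    using binomial_fact[of k "2*k", where 'a=rat] by (simp add: mult_2)
  have c3: "of_nat ((2*j) choose j) = (fact (2*j) / (fact j * fact j) :: rat)"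
    using binomial_fact[of j "2*j", where 'a=rat] by (simp add: mult_2)
  have e: "2 * (k + j) - 2 * k = 2 * j" by simp
  have e2: "k + j - k = j" by simp
  show ?thesis
    unfolding T_def catalan_def e e2 c1 c2 c3
    by (simp add: field_simps power3_eq_cube)
qed

lemma odd_ne1: "2 * (of_nat n - of_nat k) - 1 \<noteq> (0::rat)"
proof
  assume "2 * (of_nat n - of_nat k) - 1 = (0::rat)"
  hence "of_int (2 * (int n - int k) - 1) = (0::rat)" by simp
  hence "2 * (int n - int k) - 1 = 0" by (simp only: of_int_eq_0_iff)
  thus False by presburger
qed

lemma odd_ne3: "2 * (of_nat n - of_nat k) - 3 \<noteq> (0::rat)"
proof
  assume "2 * (of_nat n - of_nat k) - 3 = (0::rat)"
  hence "of_int (2 * (int n - int k) - 3) = (0::rat)" by simp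
  hence "2 * (int n - int k) - 3 = 0" by (simp only: of_int_eq_0_iff)
  thus False by presburger
qed

lemma algA':
  fixes a b u v w p q s E c d :: rat
  assumes "a \<noteq> 0" "b \<noteq> 0" "u \<noteq> 0" "v \<noteq> 0" "w \<noteq> 0"
  shows "(- s * E * ((2*u)*p*c) * d / ((u*a)^3 * v * b^3)) * (u*v*q)
    = - p * w^2 * (s * E * c * ((2*w)*q*d) / (a^3 * u * (w*b)^3))"
  using assms by (simp add: field_simps power3_eq_cube power2_eq_square)

lemma algA:
  fixes a b x y s E c d :: rat
  assumes "a \<noteq> 0" "b \<noteq> 0" "x \<ge> 0" "y \<ge> 0"
  shows "(- s * E * ((2*x+2)*(2*x+1)*c) * d / (((x+1)*a)^3 * (x+2) * b^3)) * ((x+1)*(x+2)*(2*(y+1)-1))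
    = - (2*x+1) * (y+1)^2 * (s * E * c * ((2*y+2)*(2*y+1)*d) / (a^3 * (x+1) * ((y+1)*b)^3))"
proof -
  have nz: "x+1 \<noteq> 0" "x+2 \<noteq> 0" "y+1 \<noteq> 0" using assms by linarith+
  have r: "2*x+2 = 2*(x+1)" "2*y+2 = 2*(y+1)" "2*y+1 = 2*(y+1)-1" by simp_all
  show ?thesis unfolding r
    by (rule algA'[OF assms(1,2) nz])
qed

lemma algB':
  fixes a b u w s E c d :: rat
  assumes "a \<noteq> 0" "b \<noteq> 0" "u \<noteq> 0" "w \<noteq> 0"
  shows "(s * E * c * d / (a^3 * u * b^3)) * (2*N*(2*w-1))
    = w^2 * (s * (N*E) * c * ((2*w)*(2*w-1)*d) / (a^3 * u * (w*b)^3))"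
  using assms by (simp add: field_simps power3_eq_cube power2_eq_square)

lemma algB:
  fixes a b x y s E c d :: rat
  assumes "a \<noteq> 0" "b \<noteq> 0" "x \<ge> 0" "y \<ge> 0"
  shows "(s * E * c * d / (a^3 * (x+1) * b^3)) * (2*(x+y+1)*(2*(y+1)-1))
    = (y+1)^2 * (s * ((x+y+1)*E) * c * ((2*y+2)*(2*y+1)*d) / (a^3 * (x+1) * ((y+1)*b)^3))"
proof -
  have nz: "x+1 \<noteq> 0" "y+1 \<noteq> 0" using assms by linarith+
  have r: "2*y+2 = 2*(y+1)" "2*y+1 = 2*(y+1)-1" by simp_all
  show ?thesis unfolding r
    by (rule algB'[OF assms(1,2) nz])
qed

lemma fact2: "fact (2*(m+1)) = ((2*of_nat m+2)*(2*of_nat m+1)*fact (2*m) :: rat)"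
proof -
  have "2*(m+1) = Suc (Suc (2*m))" by simp
  then show ?thesis by (simp only: fact_Suc) (simp add: algebra_simps)
qed

lemma fact1: "fact (m+1) = ((of_nat m+1)*fact m :: rat)"
  by (simp add: algebra_simps)

lemma T_A:
  "T n (k+1) * (of_nat (k+1) * of_nat (k+2) * (2 * (of_nat n - of_nat k) - 1))
     = - (2 * of_nat k + 1) * (of_nat n - of_nat k)^2 * T n k"
proof (cases "k < n")
  case True
  then obtain j where n: "n = k + (j+1)" by (metis Suc_eq_plus1 add_Suc_right less_imp_Suc_add)
  define s :: rat where "s = (-1)^k"
  define E :: rat where "E = fact n"
  define x :: rat where "x = of_nat k"
  define y :: rat where "y = of_nat j"
  have n1: "n = (k+1)+j" using n by simp
  have h1: "T n (k+1) = - s * E * ((2*x+2)*(2*x+1)*fact (2*k)) * fact (2*j)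
       / (((x+1)*fact k)^3 * (x+2) * fact j^3)"
  proof -
    have "T n (k+1) = (-1)^(k+1) * fact n * fact (2*(k+1)) * fact (2*j) /
      (fact (k+1) ^ 3 * of_nat (k+1+1) * fact j ^ 3)" using T_fact[of "k+1" j] by (simp only: n1)
    also have "\<dots> = - s * E * ((2*x+2)*(2*x+1)*fact (2*k)) * fact (2*j)
       / (((x+1)*fact k)^3 * (x+2) * fact j^3)"
      unfolding fact2 fact1 s_def E_def x_def by simp
    finally show ?thesis .
  qed
  have h0: "T n k = s * E * fact (2*k) * ((2*y+2)*(2*y+1)*fact (2*j))
       / (fact k^3 * (x+1) * ((y+1)*fact j)^3)"
  proof -
    have "T n k = (-1)^k * fact n * fact (2*k) * fact (2*(j+1)) /
      (fact k ^ 3 * of_nat (k+1) * fact (j+1) ^ 3)" using T_fact[of k "j+1"] by (simp only: n)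
    also have "\<dots> = s * E * fact (2*k) * ((2*y+2)*(2*y+1)*fact (2*j))
       / (fact k^3 * (x+1) * ((y+1)*fact j)^3)"
      unfolding fact2 fact1 s_def E_def x_def y_def by simp
    finally show ?thesis .
  qed
  have d: "of_nat n - of_nat k = y + (1::rat)" by (simp add: n y_def)
  have e1: "of_nat (k+1) = x + (1::rat)" "of_nat (k+2) = x + (2::rat)" "2 * of_nat k + 1 = 2*x+(1::rat)"
    by (simp_all add: x_def)
  have "x \<ge> 0" "y \<ge> 0" by (simp_all add: x_def y_def)
  then show ?thesis unfolding h1 h0 d e1
    using algA[of "fact k" "fact j" x y s E "fact (2*k)" "fact (2*j)"] by simp
next
  case False
  then show ?thesis
  proof (cases "k = n")
    case True then show ?thesis by (simp add: T_zero)
  next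
    case False
    with \<open>\<not> k < n\<close> show ?thesis by (simp add: T_zero)
  qed
qed

lemma T_B:
  assumes "n \<ge> 1"
  shows "T (n-1) k * (2 * of_nat n * (2 * (of_nat n - of_nat k) - 1))
     = (of_nat n - of_nat k)^2 * T n k"
proof (cases "k < n")
  case True
  then obtain j where n: "n = k + (j+1)" by (metis Suc_eq_plus1 add_Suc_right less_imp_Suc_add)
  define s :: rat where "s = (-1)^k"
  define E :: rat where "E = fact (k+j)"
  define x :: rat where "x = of_nat k"
  define y :: rat where "y = of_nat j"
  have n1: "n - 1 = k+j" using n by simp
  have h1: "T (n-1) k = s * E * fact (2*k) * fact (2*j) / (fact k^3 * (x+1) * fact j^3)"
    unfolding n1 T_fact s_def E_def x_def by simp
  have h0: "T n k = s * ((x+y+1)*E) * fact (2*k) * ((2*y+2)*(2*y+1)*fact (2*j))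
       / (fact k^3 * (x+1) * ((y+1)*fact j)^3)"
  proof -
    have "T n k = (-1)^k * fact ((k+j)+1) * fact (2*k) * fact (2*(j+1)) /
      (fact k ^ 3 * of_nat (k+1) * fact (j+1) ^ 3)" using T_fact[of k "j+1"] by (simp add: n)
    also have "\<dots> = s * ((x+y+1)*E) * fact (2*k) * ((2*y+2)*(2*y+1)*fact (2*j))
       / (fact k^3 * (x+1) * ((y+1)*fact j)^3)"
      unfolding fact2 fact1 s_def E_def x_def y_def by simp
    finally show ?thesis .
  qed
  have d: "of_nat n - of_nat k = y + (1::rat)" by (simp add: n y_def)
  have e1: "of_nat n = x + y + (1::rat)" by (simp add: n x_def y_def)
  have "x \<ge> 0" "y \<ge> 0" by (simp_all add: x_def y_def)
  then show ?thesis unfolding h1 h0 d unfolding e1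
    using algB[of "fact k" "fact j" x y s E "fact (2*k)" "fact (2*j)"] by simp
next
  case False
  then show ?thesis
  proof (cases "k = n")
    case True then show ?thesis using assms by (simp add: T_zero)
  next
    case False
    with \<open>\<not> k < n\<close> show ?thesis using assms by (simp add: T_zero)
  qed
qed

definition P :: "rat \<Rightarrow> rat \<Rightarrow> rat" where
  "P N K = K^2+3*K^3+2*K^4 -2*N*K -8*N*K^2 -4*N*K^3 +2*N*K^4 +5*N^2*K - N^2*K^2
     -10*N^2*K^3 -4*N^2*K^4 +6*N^3*K +18*N^3*K^2+12*N^3*K^3 -8*N^4*K -8*N^4*K^2"

lemma poly_id:
  fixes N K :: rat
  shows "4*N^2*(K+1)*(K+2)*(2*(N-K)-1)*(2*(N-K)-3)*(2*N-1)*(N+1)^2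
     - 8*N*(2*N^2-1)*(K+1)*(K+2)*(2*(N-K)-3)*(N-K)^2
     - 16*N*(2*N+1)*(N-1)*(K+1)*(K+2)*(N-1-K)^2*(N-K)^2
   = -4*(2*K+1)*(N-K)^2*P N (K+1) - 4*(K+1)*(K+2)*(2*(N-K)-3)*P N K"
  unfolding P_def by (simp add: algebra_simps power2_eq_square power3_eq_cube power4_eq_xxxx)

lemma alg_main:
  fixes N K t u v w :: rat
  assumes N: "N \<ge> 2" and K: "K \<ge> 0"
    and d1: "2*(N-K)-1 \<noteq> 0" and d3: "2*(N-K)-3 \<noteq> 0"
    and A: "w*((K+1)*(K+2)*(2*(N-K)-1)) = -(2*K+1)*(N-K)^2*t"
    and B1: "u*(2*N*(2*(N-K)-1)) = (N-K)^2*t"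
    and B2: "v*(2*(N-1)*(2*(N-1-K)-1)) = (N-1-K)^2*u"
  shows "(2*N-1)*(N+1)^2*t - 4*(2*N^2-1)*u - 16*(2*N+1)*(N-1)^2*v
     = w * P N (K+1) / (N^2*(2*(N-(K+1))-1)) - t * P N K / (N^2*(2*(N-K)-1))"
proof -
  define e1 where "e1 = 2*(N-K)-1"
  define e3 where "e3 = 2*(N-K)-3"
  define M where "M = 4*N^2*(K+1)*(K+2)*e1*e3"
  have nz: "N \<noteq> 0" "K+1 \<noteq> 0" "K+2 \<noteq> 0" using N K by linarith+
  have e1: "e1 \<noteq> 0" and e3: "e3 \<noteq> 0" using d1 d3 by (simp_all add: e1_def e3_def)
  have M: "M \<noteq> 0" using nz e1 e3 by (simp add: M_def)
  have e3': "2*(N-(K+1))-1 = e3" "2*(N-1-K)-1 = e3" by (simp_all add: e3_def algebra_simps)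
  have A': "w*((K+1)*(K+2)*e1) = -(2*K+1)*(N-K)^2*t" using A by (simp add: e1_def)
  have B1': "u*(2*N*e1) = (N-K)^2*t" using B1 by (simp add: e1_def)
  have B2': "v*(2*(N-1)*e3) = (N-1-K)^2*u" using B2 e3' by simp
  have hu: "u*M = (u*(2*N*e1))*(2*N*(K+1)*(K+2)*e3)" unfolding M_def by algebra
  also have "\<dots> = t*(2*N*(K+1)*(K+2)*e3*(N-K)^2)" unfolding B1' by algebra
  finally have hu: "u*M = t*(2*N*(K+1)*(K+2)*e3*(N-K)^2)" .
  have "(N-1)*v*M = (v*(2*(N-1)*e3))*(2*N^2*(K+1)*(K+2)*e1)" unfolding M_def by algebra
  also have "\<dots> = (N-1-K)^2*N*(K+1)*(K+2)*(u*(2*N*e1))" unfolding B2' by algebra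
  also have "\<dots> = t*((N-1-K)^2*N*(K+1)*(K+2)*(N-K)^2)" unfolding B1' by algebra
  finally have hv: "(N-1)*v*M = t*((N-1-K)^2*N*(K+1)*(K+2)*(N-K)^2)" .
  have L: "((2*N-1)*(N+1)^2*t - 4*(2*N^2-1)*u - 16*(2*N+1)*(N-1)^2*v) * M
     = (2*N-1)*(N+1)^2*t*M - 4*(2*N^2-1)*(u*M) - 16*(2*N+1)*(N-1)*((N-1)*v*M)"
    by algebra
  have R1: "(w * P N (K+1) / (N^2*e3)) * M = 4*P N (K+1) * (w*((K+1)*(K+2)*e1))"
    using nz e3 unfolding M_def by (simp add: field_simps)
  have R0: "(t * P N K / (N^2*e1)) * M = 4*(K+1)*(K+2)*e3*t*P N K"
    using nz e1 unfolding M_def by (simp add: field_simps)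
  have "((2*N-1)*(N+1)^2*t - 4*(2*N^2-1)*u - 16*(2*N+1)*(N-1)^2*v) * M
      = (w * P N (K+1) / (N^2*e3) - t * P N K / (N^2*e1)) * M"
  proof -
    have "((2*N-1)*(N+1)^2*t - 4*(2*N^2-1)*u - 16*(2*N+1)*(N-1)^2*v) * M
      = t * (4*N^2*(K+1)*(K+2)*(2*(N-K)-1)*(2*(N-K)-3)*(2*N-1)*(N+1)^2
     - 8*N*(2*N^2-1)*(K+1)*(K+2)*(2*(N-K)-3)*(N-K)^2
     - 16*N*(2*N+1)*(N-1)*(K+1)*(K+2)*(N-1-K)^2*(N-K)^2)"
      unfolding L hu hv unfolding M_def e1_def e3_def by algebra
    also have "\<dots> = t * (-4*(2*K+1)*(N-K)^2*P N (K+1) - 4*(K+1)*(K+2)*(2*(N-K)-3)*P N K)"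
      by (simp only: poly_id)
    also have "\<dots> = (w * P N (K+1) / (N^2*e3) - t * P N K / (N^2*e1)) * M"
      unfolding left_diff_distrib R1 R0 A' unfolding e3_def by algebra
    finally show ?thesis .
  qed
  then have "(2*N-1)*(N+1)^2*t - 4*(2*N^2-1)*u - 16*(2*N+1)*(N-1)^2*v
      = w * P N (K+1) / (N^2*e3) - t * P N K / (N^2*e1)" using M by simp
  then show ?thesis using e3' by (simp add: e1_def)
qed

lemma T_ext: "m \<le> n \<Longrightarrow> (\<Sum>k=0..n. T m k) = (\<Sum>k=0..m. T m k)"
  by (rule sum.mono_neutral_right) (auto simp: T_zero)

theorem mainTheorem2:
  fixes n :: nat
  assumes "n \<ge> 2"
  shows "- 16 * (2 * of_nat n + 1) * (of_nat n - 1)^2 * f (n-2)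
           - 4 * (2 * (of_nat n)^2 - 1) * f (n-1)
           + (2 * of_nat n - 1) * (of_nat n + 1)^2 * f n = (0::rat)"
proof -
  define N :: rat where "N = of_nat n"
  define G where "G k = T n k * P N (of_nat k) / (N^2*(2*(N - of_nat k)-1))" for k :: nat
  have N2: "N \<ge> 2" using assms by (simp add: N_def)
  have n1: "of_nat (n-1) = N - 1" using assms by (simp add: N_def of_nat_diff)
  have nn: "n - 1 - 1 = n - 2" by simp
  have pt: "(2*N-1)*(N+1)^2*T n k - 4*(2*N^2-1)*T (n-1) k - 16*(2*N+1)*(N-1)^2*T (n-2) k
      = G (Suc k) - G k" for k
  proof -
    define K :: rat where "K = of_nat k"
    have K0: "K \<ge> 0" by (simp add: K_def)
    have A: "T n (k+1)*((K+1)*(K+2)*(2*(N-K)-1)) = -(2*K+1)*(N-K)^2*T n k"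
      using T_A[of n k] by (simp add: N_def K_def add.commute)
    have B1: "T (n-1) k*(2*N*(2*(N-K)-1)) = (N-K)^2*T n k"
      using T_B[of n k] assms by (simp add: N_def K_def)
    have B2: "T (n-2) k*(2*(N-1)*(2*(N-1-K)-1)) = (N-1-K)^2*T (n-1) k"
      using T_B[of "n-1" k] assms unfolding n1 nn by (simp add: K_def)
    have d1: "2*(N-K)-1 \<noteq> 0" unfolding N_def K_def by (rule odd_ne1)
    have d3: "2*(N-K)-3 \<noteq> 0" unfolding N_def K_def by (rule odd_ne3)
    have GS: "G (Suc k) = T n (k+1) * P N (K+1) / (N^2*(2*(N-(K+1))-1))"
      by (simp add: G_def K_def add.commute)
    have G0: "G k = T n k * P N K / (N^2*(2*(N-K)-1))" by (simp add: G_def K_def)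
    show ?thesis unfolding GS G0 by (rule alg_main[OF N2 K0 d1 d3 A B1 B2])
  qed
  have "(\<Sum>k=0..n. (2*N-1)*(N+1)^2*T n k - 4*(2*N^2-1)*T (n-1) k - 16*(2*N+1)*(N-1)^2*T (n-2) k)
      = (\<Sum>k=0..n. G (Suc k) - G k)" using pt by simp
  also have "\<dots> = G (Suc n) - G 0" by (rule sum_Suc_diff) simp
  also have "\<dots> = 0" by (simp add: G_def T_zero P_def)
  finally have S: "(\<Sum>k=0..n. (2*N-1)*(N+1)^2*T n k - 4*(2*N^2-1)*T (n-1) k - 16*(2*N+1)*(N-1)^2*T (n-2) k) = 0" .
  have "(\<Sum>k=0..n. (2*N-1)*(N+1)^2*T n k - 4*(2*N^2-1)*T (n-1) k - 16*(2*N+1)*(N-1)^2*T (n-2) k)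
     = (2*N-1)*(N+1)^2*(\<Sum>k=0..n. T n k) - 4*(2*N^2-1)*(\<Sum>k=0..n. T (n-1) k)
       - 16*(2*N+1)*(N-1)^2*(\<Sum>k=0..n. T (n-2) k)"
    by (simp add: sum_subtractf sum_distrib_left)
  also have "\<dots> = (2*N-1)*(N+1)^2*f n - 4*(2*N^2-1)*f (n-1) - 16*(2*N+1)*(N-1)^2*f (n-2)"
  proof -
    have "(\<Sum>k=0..n. T (n-1) k) = f (n-1)" unfolding f_T by (rule T_ext) simp
    moreover have "(\<Sum>k=0..n. T (n-2) k) = f (n-2)" unfolding f_T by (rule T_ext) simp
    ultimately show ?thesis by (simp only: f_T)
  qed
  finally show ?thesis using S by (simp add: N_def algebra_simps)
qed

end
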